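(* Let $q\in[-1,1]$. For an analytic function $f$ of $N$ variables define \[ \mathcal{D}^{U(N),q}_k(f)(u_1,\dots,u_N)=\Big(\prod_{i<j}\frac1{u_i-u_j}\Big)\sum_{i=1}^Nu_i^{1-q}\partial_i\Big[(u_i\partial_i)^{k-1}\Big(\prod_{i<j}(u_i-u_j)\,f(u_1,\dots,u_N)\Big)\Big]. \] Then for every $\lambda\in\hat U(N)$ and $k\in\mathbb{N}$, \[ \frac1{\chi^\lambda(1^N)}\,\mathcal{D}^{U(N),q}_k\chi^\lambda(u_1,\dots,u_N)\Big|_{u_1=\dots=u_N=1}=N^{k+1}\int_{\mathbb{R}}t^k\,m_{N,PP(q)}[\lambda](dt). \]
   Context: A signature of length $N$ is $\lambda=(\lambda_1\ge\dots\ge\lambda_N)\in\mathbb{Z}^N$; $\hat U(N)$ is the set of such signatures. $\chi^{\lambda}(u_1,\dots,u_N)=\det(u_i^{\lambda_j+N-j})_{i,j}/\prod_{i<j}(u_i-u_j)$ is the rational Schur function, $1^N=(1,\dots,1)$, $\partial_i=\partial/\partial u_i$, and $(u_i\partial_i)g:=u_i\partial_ig$. The $q$-deformed Perelomov–Popov measure is \[ m_{N,PP(q)}[\lambda]=\frac1N\sum_{i=1}^N\Big(\prod_{j\ne i}\frac{(\lambda_i-i)-(\lambda_j-j)-q}{(\lambda_i-i)-(\lambda_j-j)}\Big)\delta\Big(\frac{\lambda_i+N-i}{N}\Big). \] *)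

theory Defs
  imports "HOL-Analysis.Analysis"
begin

text \<open>Points of the N-dimensional domain are functions u :: nat => real; only the
  coordinates u 0, ..., u (N-1) are used (0-based indexing).\<close>

definition is_signature :: "nat \<Rightarrow> (nat \<Rightarrow> int) \<Rightarrow> bool" where
  "is_signature N lam \<longleftrightarrow> (\<forall>i j. i \<le> j \<and> j < N \<longrightarrow> lam j \<le> lam i)"

definition det_nat :: "nat \<Rightarrow> (nat \<Rightarrow> nat \<Rightarrow> real) \<Rightarrow> real" where
  "det_nat N a = (\<Sum>p\<in>{p. p permutes {..<N}}. of_int (sign p) * (\<Prod>i<N. a i (p i)))"

definition vdm :: "nat \<Rightarrow> (nat \<Rightarrow> real) \<Rightarrow> real" where
  "vdm N u = (\<Prod>j<N. \<Prod>i<j. (u i - u j))"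

text \<open>Rational Schur function chi^lam(u) = det(u_i^(lam_j+N-j)) / prod_{i<j}(u_i-u_j)
  (1-based exponent lam_j + N - j becomes lam j + N - 1 - j with 0-based j).\<close>
definition schur :: "nat \<Rightarrow> (nat \<Rightarrow> int) \<Rightarrow> (nat \<Rightarrow> real) \<Rightarrow> real" where
  "schur N lam u = det_nat N (\<lambda>i j. u i powi (lam j + int N - 1 - int j)) / vdm N u"

definition partial :: "nat \<Rightarrow> ((nat \<Rightarrow> real) \<Rightarrow> real) \<Rightarrow> (nat \<Rightarrow> real) \<Rightarrow> real" where
  "partial i F u = deriv (\<lambda>t. F (u(i := t))) (u i)"

definition euler_op :: "nat \<Rightarrow> ((nat \<Rightarrow> real) \<Rightarrow> real) \<Rightarrow> (nat \<Rightarrow> real) \<Rightarrow> real" where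
  "euler_op i F = (\<lambda>u. u i * partial i F u)"

definition D_op :: "nat \<Rightarrow> real \<Rightarrow> nat \<Rightarrow> ((nat \<Rightarrow> real) \<Rightarrow> real) \<Rightarrow> (nat \<Rightarrow> real) \<Rightarrow> real" where
  "D_op N q k f u = (1 / vdm N u) *
     (\<Sum>i<N. u i powr (1 - q) *
        partial i ((euler_op i ^^ (k - 1)) (\<lambda>v. vdm N v * f v)) u)"

text \<open>Open domain of points with positive pairwise distinct coordinates; the value
  "at u_1 = ... = u_N = 1" is the limit at the all-ones point within this domain
  (coordinates with index >= N are frozen at 1).\<close>
definition gen_dom :: "nat \<Rightarrow> (nat \<Rightarrow> real) set" where
  "gen_dom N = {u. (\<forall>i<N. 0 < u i) \<and> (\<forall>i\<ge>N. u i = 1) \<and> (\<forall>i<N. \<forall>j<N. i \<noteq> j \<longrightarrow> u i \<noteq> u j)}"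

definition pp_weight :: "nat \<Rightarrow> real \<Rightarrow> (nat \<Rightarrow> int) \<Rightarrow> nat \<Rightarrow> real" where
  "pp_weight N q lam i =
     (\<Prod>j\<in>{..<N} - {i}.
        (real_of_int ((lam i - int i) - (lam j - int j)) - q) /
        real_of_int ((lam i - int i) - (lam j - int j)))"

text \<open>Location of the atom with index i: (lam_i + N - i)/N in 1-based indexing.\<close>
definition pp_atom :: "nat \<Rightarrow> (nat \<Rightarrow> int) \<Rightarrow> nat \<Rightarrow> real" where
  "pp_atom N lam i = real_of_int (lam i + int N - 1 - int i) / real N"

text \<open>Integral of t^k against the (signed, finitely supported) measure
  m_{N,PP(q)}[lam] = (1/N) sum_i w_i delta(x_i).\<close>
definition pp_moment :: "nat \<Rightarrow> real \<Rightarrow> (nat \<Rightarrow> int) \<Rightarrow> nat \<Rightarrow> real" where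
  "pp_moment N q lam k = (1 / real N) * (\<Sum>i<N. pp_weight N q lam i * pp_atom N lam i ^ k)"

end

theory Submission
  imports Defs "Jordan_Normal_Form.Determinant" "HOL-Computational_Algebra.Polynomial"
begin

fun dd :: "(real \<Rightarrow> real) \<Rightarrow> (nat \<Rightarrow> real) \<Rightarrow> nat \<Rightarrow> real \<Rightarrow> real" where
  "dd g x 0 y = g y"
| "dd g x (Suc n) y = (dd g x n y - dd g x n (x n)) / (y - x n)"

lemma dd_step: "dd g x n y = dd g x n (x n) + (y - x n) * dd g x (Suc n) y"
proof (cases "y = x n")
  case True then show ?thesis by simp
next
  case False
  then have "(y - x n) * dd g x (Suc n) y = dd g x n y - dd g x n (x n)" by simp
  then show ?thesis by simp
qed

lemma newton:
  "g y = (\<Sum>c<n. dd g x c (x c) * (\<Prod>m<c. y - x m)) + dd g x n y * (\<Prod>m<n. y - x m)"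
proof (induction n)
  case 0 then show ?case by simp
next
  case (Suc n)
  have alg: "\<And>a b c d P::real. a = b + c * d \<Longrightarrow> a * P = b * P + d * (P * c)"
    by (simp add: algebra_simps)
  have "dd g x n y * (\<Prod>m<n. y - x m) = dd g x n (x n) * (\<Prod>m<n. y - x m) + dd g x (Suc n) y * ((\<Prod>m<n. y - x m) * (y - x n))"
    by (rule alg[OF dd_step])
  then show ?case using Suc.IH by (simp del: dd.simps)
qed

declare dd.simps(2)[simp del]

definition NP :: "(real \<Rightarrow> real) \<Rightarrow> (nat \<Rightarrow> real) \<Rightarrow> nat \<Rightarrow> real poly" where
  "NP g x n = (\<Sum>c\<le>n. Polynomial.smult (dd g x c (x c)) (\<Prod>m<c. [:-x m, 1:]))"

lemma poly_NP: "poly (NP g x n) y = (\<Sum>c\<le>n. dd g x c (x c) * (\<Prod>m<c. y - x m))"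
  by (simp add: NP_def poly_sum poly_prod)

lemma NP_interp: assumes "a \<le> n" shows "poly (NP g x n) (x a) = g (x a)"
proof -
  have "(\<Prod>m<Suc n. x a - x m) = 0"
    using assms by (intro prod_zero) auto
  then show ?thesis
    using newton[of g "x a" x "Suc n"] by (simp add: poly_NP lessThan_Suc_atMost)
qed

lemma degree_lin_prod: "degree (\<Prod>m<c. [:-(x m::real), 1:]) = c"
  by (subst degree_prod_eq_sum_degree) auto

lemma lead_lin_prod: "coeff (\<Prod>m<c. [:-(x m::real), 1:]) c = 1"
proof -
  have "coeff (\<Prod>m<c. [:-(x m::real), 1:]) c = lead_coeff (\<Prod>m<c. [:-(x m::real), 1:])"
    by (simp add: degree_lin_prod)
  also have "\<dots> = 1" by (simp add: lead_coeff_prod)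
  finally show ?thesis .
qed

lemma degree_NP: "degree (NP g x n) \<le> n"
  unfolding NP_def
  by (intro degree_sum_le) (auto intro: order.trans[OF degree_smult_le] simp: degree_lin_prod)

lemma coeff_NP: "coeff (NP g x n) n = dd g x n (x n)"
proof -
  have "coeff (NP g x n) n = (\<Sum>c\<le>n. dd g x c (x c) * coeff (\<Prod>m<c. [:-x m, 1:]) n)"
    by (simp add: NP_def coeff_sum)
  also have "\<dots> = (\<Sum>c\<in>{n}. dd g x c (x c) * coeff (\<Prod>m<c. [:-x m, 1:]) n)"
  proof (rule sum.mono_neutral_right)
    show "\<forall>c\<in>{..n} - {n}. dd g x c (x c) * coeff (\<Prod>m<c. [:-x m, 1:]) n = 0"
      by (auto intro!: coeff_eq_0 simp: degree_lin_prod)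
  qed auto
  finally show ?thesis by (simp add: lead_lin_prod)
qed

lemma higher_pderiv_top:
  fixes P :: "real poly"
  assumes "degree P \<le> n"
  shows "(pderiv ^^ n) P = [:fact n * coeff P n:]"
proof (rule poly_eqI)
  fix i
  show "coeff ((pderiv ^^ n) P) i = coeff [:fact n * coeff P n:] i"
  proof (cases i)
    case 0 then show ?thesis by (simp add: coeff_higher_pderiv pochhammer_fact)
  next
    case (Suc j)
    then have "coeff P (i + n) = 0" using assms by (intro coeff_eq_0) auto
    then show ?thesis using Suc by (simp add: coeff_higher_pderiv)
  qed
qed

lemma chain_mono: "\<forall>i<n. (s::nat\<Rightarrow>real) i < s (Suc i) \<Longrightarrow> i \<le> j \<Longrightarrow> j \<le> n \<Longrightarrow> s i \<le> s j"
proof (induction j)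
  case 0 then show ?case by simp
next
  case (Suc j)
  then show ?case by (cases "i = Suc j") (auto intro: order.trans[of _ "s j"] simp: less_imp_le)
qed

lemma gen_rolle:
  fixes f :: "nat \<Rightarrow> real \<Rightarrow> real" and s :: "nat \<Rightarrow> real"
  assumes "\<forall>i<n. s i < s (Suc i)"
    and "\<forall>j<n. \<forall>t. s 0 \<le> t \<and> t \<le> s n \<longrightarrow> (f j has_real_derivative f (Suc j) t) (at t)"
    and "\<forall>i\<le>n. f 0 (s i) = 0"
  shows "\<exists>\<xi>. s 0 \<le> \<xi> \<and> \<xi> \<le> s n \<and> f n \<xi> = 0"
  using assms
proof (induction n arbitrary: f s)
  case 0 then show ?case by auto
next
  case (Suc n)
  have mono: "\<And>i j. i \<le> j \<Longrightarrow> j \<le> Suc n \<Longrightarrow> s i \<le> s j"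
    using chain_mono[OF Suc.prems(1)] by blast
  have "\<forall>i\<le>n. \<exists>t. s i < t \<and> t < s (Suc i) \<and> f 1 t = 0"
  proof (intro allI impI)
    fix i assume i: "i \<le> n"
    have lt: "s i < s (Suc i)" using Suc.prems(1) i by auto
    have der: "\<And>t. s i \<le> t \<Longrightarrow> t \<le> s (Suc i) \<Longrightarrow> (f 0 has_real_derivative f 1 t) (at t)"
    proof -
      fix t assume "s i \<le> t" "t \<le> s (Suc i)"
      moreover have "s 0 \<le> s i" "s (Suc i) \<le> s (Suc n)" using mono i by auto
      ultimately show "(f 0 has_real_derivative f 1 t) (at t)"
        using Suc.prems(2) by auto
    qed
    have cont: "continuous_on {s i..s (Suc i)} (f 0)"
      by (intro continuous_at_imp_continuous_on ballI DERIV_isCont) (use der in auto)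
    have "f 0 (s i) = f 0 (s (Suc i))" using Suc.prems(3) i by auto
    moreover have "\<And>x. s i < x \<Longrightarrow> x < s (Suc i) \<Longrightarrow> f 0 differentiable (at x)"
      using der real_differentiable_def less_imp_le by blast
    ultimately obtain z where z: "s i < z" "z < s (Suc i)" "DERIV (f 0) z :> 0"
      using Rolle[OF lt _ cont] by blast
    have "DERIV (f 0) z :> f 1 z" using der z by auto
    then have "f 1 z = 0" using DERIV_unique z(3) by blast
    then show "\<exists>t. s i < t \<and> t < s (Suc i) \<and> f 1 t = 0" using z by blast
  qed
  then obtain t where t: "\<forall>i\<le>n. s i < t i \<and> t i < s (Suc i) \<and> f 1 (t i) = 0"
    by (metis (no_types))
  have "\<exists>\<xi>. t 0 \<le> \<xi> \<and> \<xi> \<le> t n \<and> (\<lambda>j. f (Suc j)) n \<xi> = 0"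
  proof (rule Suc.IH)
    show "\<forall>i<n. t i < t (Suc i)" proof (intro allI impI)
      fix i assume "i < n"
      then have "t i < s (Suc i)" "s (Suc i) < t (Suc i)" using t by auto
      then show "t i < t (Suc i)" by linarith
    qed
    show "\<forall>j<n. \<forall>x. t 0 \<le> x \<and> x \<le> t n \<longrightarrow> (f (Suc j) has_real_derivative f (Suc (Suc j)) x) (at x)"
    proof (intro allI impI)
      fix j x assume j: "j < n" and x: "t 0 \<le> x \<and> x \<le> t n"
      have "s 0 < t 0" "t n < s (Suc n)" using t by auto
      then show "(f (Suc j) has_real_derivative f (Suc (Suc j)) x) (at x)"
        using Suc.prems(2) j x by auto
    qed
    show "\<forall>i\<le>n. f (Suc 0) (t i) = 0" using t by auto
  qed
  then obtain \<xi> where "t 0 \<le> \<xi>" "\<xi> \<le> t n" "f (Suc n) \<xi> = 0" by auto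
  moreover have "s 0 < t 0" "t n < s (Suc n)" using t by auto
  ultimately show ?case by (intro exI[of _ \<xi>]) auto
qed


lemma dd_mvt:
  fixes x :: "nat \<Rightarrow> real" and f :: "nat \<Rightarrow> real \<Rightarrow> real"
  assumes inj: "inj_on x {..n}"
    and der: "\<forall>j<n. \<forall>t\<in>{a..b}. (f j has_real_derivative f (Suc j) t) (at t)"
    and g: "f 0 = g"
    and nodes: "\<forall>i\<le>n. x i \<in> {a..b}"
  shows "\<exists>\<xi>\<in>{a..b}. dd g x n (x n) = f n \<xi> / fact n"
proof -
  define X where "X = x ` {..n}"
  have finX: "finite X" by (simp add: X_def)
  have cardX: "card X = Suc n" using card_image[OF inj] by (simp add: X_def)
  define l where "l = sorted_list_of_set X"
  have l1: "sorted_wrt (<) l" by (simp add: l_def strict_sorted_list_of_set)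
  have l2: "set l = X" using finX by (simp add: l_def)
  have l3: "length l = Suc n" using finX cardX by (simp add: l_def)
  define s where "s i = l ! i" for i
  have sinc: "\<forall>i<n. s i < s (Suc i)"
    using l1 l3 by (auto simp: s_def intro: sorted_wrt_nth_less)
  have sX: "\<And>i. i \<le> n \<Longrightarrow> s i \<in> X"
    using l2 l3 by (metis le_imp_less_Suc nth_mem s_def)
  have Xs: "\<And>i. i \<le> n \<Longrightarrow> \<exists>a\<le>n. s i = x a"
    using sX by (auto simp: X_def)
  have Xab: "X \<subseteq> {a..b}" using nodes by (auto simp: X_def)
  define P where "P = NP g x n"
  define \<phi> where "\<phi> j t = f j t - poly ((pderiv ^^ j) P) t" for j t
  have "\<exists>\<xi>. s 0 \<le> \<xi> \<and> \<xi> \<le> s n \<and> \<phi> n \<xi> = 0"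
  proof (rule gen_rolle)
    show "\<forall>i<n. s i < s (Suc i)" by (rule sinc)
    show "\<forall>j<n. \<forall>t. s 0 \<le> t \<and> t \<le> s n \<longrightarrow> (\<phi> j has_real_derivative \<phi> (Suc j) t) (at t)"
    proof (intro allI impI)
      fix j t assume j: "j < n" and t: "s 0 \<le> t \<and> t \<le> s n"
      have "s 0 \<in> {a..b}" "s n \<in> {a..b}" using sX[of 0] sX[of n] Xab by auto
      then have tab: "t \<in> {a..b}" using t by auto
      have "(f j has_real_derivative f (Suc j) t) (at t)" using der j tab by auto
      moreover have "(poly ((pderiv ^^ j) P) has_real_derivative poly ((pderiv ^^ Suc j) P) t) (at t)"
        by (simp add: poly_DERIV)
      ultimately show "(\<phi> j has_real_derivative \<phi> (Suc j) t) (at t)"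
        unfolding \<phi>_def[abs_def] by (intro DERIV_diff) auto
    qed
    show "\<forall>i\<le>n. \<phi> 0 (s i) = 0"
    proof (intro allI impI)
      fix i assume "i \<le> n"
      then obtain a where a: "a \<le> n" "s i = x a" using Xs by blast
      show "\<phi> 0 (s i) = 0" using NP_interp[OF a(1), of g x] a g by (simp add: \<phi>_def P_def)
    qed
  qed
  then obtain \<xi> where xi: "s 0 \<le> \<xi>" "\<xi> \<le> s n" "\<phi> n \<xi> = 0" by blast
  have "s 0 \<in> {a..b}" "s n \<in> {a..b}" using sX[of 0] sX[of n] Xab by auto
  then have xiab: "\<xi> \<in> {a..b}" using xi by auto
  have "(pderiv ^^ n) P = [:fact n * coeff P n:]"
    by (rule higher_pderiv_top) (simp add: P_def degree_NP)
  then have "f n \<xi> = fact n * dd g x n (x n)"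
    using xi(3) by (simp add: \<phi>_def P_def coeff_NP)
  then have "dd g x n (x n) = f n \<xi> / fact n" by simp
  then show ?thesis using xiab by blast
qed


definition ff :: "real \<Rightarrow> nat \<Rightarrow> real" where "ff s j = (\<Prod>i<j. s - real i)"
definition pw :: "real \<Rightarrow> real \<Rightarrow> nat \<Rightarrow> real \<Rightarrow> real" where
  "pw \<kappa> s j x = \<kappa> * ff s j * x powr (s - real j)"

lemma pw_deriv:
  assumes "0 < x"
  shows "(pw \<kappa> s j has_real_derivative pw \<kappa> s (Suc j) x) (at x)"
proof -
  have "((\<lambda>x. \<kappa> * ff s j * x powr (s - real j)) has_real_derivative
          \<kappa> * ff s j * ((s - real j) * x powr (s - real j - 1))) (at x)"
    by (intro DERIV_cmult has_real_derivative_powr assms)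
  moreover have "\<kappa> * ff s j * ((s - real j) * x powr (s - real j - 1)) = pw \<kappa> s (Suc j) x"
  proof -
    have "ff s (Suc j) = ff s j * (s - real j)" by (simp add: ff_def)
    moreover have "s - real (Suc j) = s - real j - 1" by simp
    ultimately show ?thesis by (simp only: pw_def mult_ac)
  qed
  ultimately show ?thesis by (simp add: pw_def[abs_def])
qed

lemma pw0: "pw \<kappa> s 0 x = \<kappa> * x powr s"
  by (simp add: pw_def ff_def)

lemma entry_lim:
  assumes aN: "a < N"
  shows "((\<lambda>u. dd (pw \<kappa> s 0) u a (u a)) \<longlongrightarrow> pw \<kappa> s a 1 / fact a) (at (\<lambda>_. 1) within gen_dom N)"
proof (unfold tendsto_iff, intro allI impI)
  fix e :: real assume e: "0 < e"
  have "isCont (pw \<kappa> s a) 1" by (rule DERIV_isCont[OF pw_deriv]) simp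
  then have "(pw \<kappa> s a) \<midarrow>1\<rightarrow> pw \<kappa> s a 1" by (simp add: isCont_def)
  moreover have "0 < e * fact a" using e by simp
  ultimately obtain \<delta> where \<delta>: "\<delta> > 0" and
    d: "\<And>y. y \<noteq> 1 \<and> norm (y - 1) < \<delta> \<Longrightarrow> norm (pw \<kappa> s a y - pw \<kappa> s a 1) < e * fact a"
    using LIM_D by blast
  define \<delta>' where "\<delta>' = min (\<delta>/2) (1/2)"
  have \<delta>': "0 < \<delta>'" "\<delta>' < \<delta>" "\<delta>' \<le> 1/2" using \<delta> by (auto simp: \<delta>'_def)
  have d': "\<And>y. \<bar>y - 1\<bar> \<le> \<delta>' \<Longrightarrow> \<bar>pw \<kappa> s a y - pw \<kappa> s a 1\<bar> < e * fact a"
  proof -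
    fix y :: real assume "\<bar>y - 1\<bar> \<le> \<delta>'"
    then show "\<bar>pw \<kappa> s a y - pw \<kappa> s a 1\<bar> < e * fact a"
      using d[of y] \<delta>' e by (cases "y = 1") auto
  qed
  have ev1: "eventually (\<lambda>u. \<forall>i\<in>{..<N}. dist (u i) 1 < \<delta>') (at (\<lambda>_. 1::real) within gen_dom N)"
  proof (rule eventually_ball_finite, simp, intro ballI)
    fix i :: nat
    have "isCont (\<lambda>u::nat\<Rightarrow>real. u i) (\<lambda>_. 1)"
    proof -
      have "continuous_on UNIV (\<lambda>u::nat\<Rightarrow>real. u i)" by simp
      then show ?thesis by (metis UNIV_I continuous_on_eq_continuous_at open_UNIV)
    qed
    then have "((\<lambda>u::nat\<Rightarrow>real. u i) \<longlongrightarrow> 1) (at (\<lambda>_. 1))" by (simp add: isCont_def)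
    then have "((\<lambda>u::nat\<Rightarrow>real. u i) \<longlongrightarrow> 1) (at (\<lambda>_. 1) within gen_dom N)"
      by (rule tendsto_within_subset) simp
    then show "eventually (\<lambda>u. dist (u i) 1 < \<delta>') (at (\<lambda>_. 1) within gen_dom N)"
      using \<delta>'(1) by (auto simp: tendsto_iff)
  qed
  have ev2: "eventually (\<lambda>u. u \<in> gen_dom N) (at (\<lambda>_. 1::real) within gen_dom N)"
    by (simp add: eventually_at_filter)
  show "eventually (\<lambda>u. dist (dd (pw \<kappa> s 0) u a (u a)) (pw \<kappa> s a 1 / fact a) < e)
          (at (\<lambda>_. 1) within gen_dom N)"
    using ev1 ev2
  proof eventually_elim
    case (elim u)
    have inj: "inj_on u {..a}"
      using elim(2) aN unfolding gen_dom_def inj_on_def by (auto, meson le_less_trans)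
    have nodes: "\<forall>i\<le>a. u i \<in> {1 - \<delta>'..1 + \<delta>'}"
    proof (intro allI impI)
      fix i assume "i \<le> a"
      then have "i < N" using aN by simp
      then have "\<bar>u i - 1\<bar> < \<delta>'" using elim(1) by (auto simp: dist_real_def)
      then show "u i \<in> {1 - \<delta>'..1 + \<delta>'}" by auto
    qed
    have der: "\<forall>j<a. \<forall>t\<in>{1 - \<delta>'..1 + \<delta>'}. (pw \<kappa> s j has_real_derivative pw \<kappa> s (Suc j) t) (at t)"
      using \<delta>' by (auto intro!: pw_deriv)
    obtain \<xi> where \<xi>: "\<xi> \<in> {1 - \<delta>'..1 + \<delta>'}" "dd (pw \<kappa> s 0) u a (u a) = pw \<kappa> s a \<xi> / fact a"
      using dd_mvt[OF inj der refl nodes] by blast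
    have "\<bar>\<xi> - 1\<bar> \<le> \<delta>'" using \<xi>(1) by auto
    then have "\<bar>pw \<kappa> s a \<xi> - pw \<kappa> s a 1\<bar> < e * fact a" by (rule d')
    then have "\<bar>pw \<kappa> s a \<xi> - pw \<kappa> s a 1\<bar> / fact a < e"
      by (simp add: divide_less_eq mult.commute)
    moreover have "\<bar>pw \<kappa> s a \<xi> / fact a - pw \<kappa> s a 1 / fact a\<bar> = \<bar>pw \<kappa> s a \<xi> - pw \<kappa> s a 1\<bar> / fact a"
      by (simp add: diff_divide_distrib[symmetric])
    ultimately show ?case using \<xi>(2) by (simp add: dist_real_def)
  qed
qed


lemma det_nat_mat: "det_nat N A = det (mat N N (\<lambda>(i,j). A i j))"
proof -
  have "det (mat N N (\<lambda>(i,j). A i j)) = (\<Sum>p\<in>{p. p permutes {0..<N}}. signof p * (\<Prod>i=0..<N. mat N N (\<lambda>(i,j). A i j) $$ (i, p i)))"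
    by (rule det_def') simp
  also have "\<dots> = det_nat N A"
    unfolding det_nat_def atLeast0LessThan
  proof (rule sum.cong[OF refl])
    fix p assume "p \<in> {p. p permutes {..<N}}"
    then have pN: "\<And>i. i < N \<Longrightarrow> p i < N" using permutes_in_image by fastforce
    have "(\<Prod>i<N. mat N N (\<lambda>(i,j). A i j) $$ (i, p i)) = (\<Prod>i<N. A i (p i))"
      by (rule prod.cong) (auto simp: pN)
    then show "signof p * (\<Prod>i<N. mat N N (\<lambda>(i,j). A i j) $$ (i, p i)) = of_int (sign p) * (\<Prod>i<N. A i (p i))"
      by simp
  qed
  finally show ?thesis by simp
qed

definition T :: "nat \<Rightarrow> (nat \<Rightarrow> real) \<Rightarrow> real" where
  "T N u = (\<Prod>a<N. \<Prod>m<a. u a - u m)"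

lemma det_newton:
  "det_nat N (\<lambda>a c. G c (u a)) = T N u * det_nat N (\<lambda>a c. dd (G c) u a (u a))"
proof -
  define Lm where "Lm = mat N N (\<lambda>(a,c). \<Prod>m<c. u a - u m)"
  define Dm where "Dm = mat N N (\<lambda>(c,c'). dd (G c') u c (u c))"
  have Lc: "Lm \<in> carrier_mat N N" and Dc: "Dm \<in> carrier_mat N N" by (auto simp: Lm_def Dm_def)
  have prod: "mat N N (\<lambda>(a,c). G c (u a)) = Lm * Dm"
  proof (rule eq_matI)
    fix a c assume a: "a < dim_row (Lm * Dm)" and c: "c < dim_col (Lm * Dm)"
    then have aN: "a < N" "c < N" by (auto simp: Lm_def Dm_def)
    have "(Lm * Dm) $$ (a,c) = (\<Sum>i<N. (\<Prod>m<i. u a - u m) * dd (G c) u i (u i))"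
      using aN by (simp add: Lm_def Dm_def scalar_prod_def atLeast0LessThan)
    also have "\<dots> = G c (u a)"
    proof -
      have "(\<Prod>m<N. u a - u m) = 0" using aN by (intro prod_zero) auto
      then show ?thesis using newton[of "G c" "u a" u N] by (simp add: mult.commute)
    qed
    finally show "mat N N (\<lambda>(a,c). G c (u a)) $$ (a,c) = (Lm * Dm) $$ (a,c)" using aN by simp
  qed (auto simp: Lm_def Dm_def)
  have "det Lm = prod_list (diag_mat Lm)"
  proof (rule det_lower_triangular[OF _ Lc])
    fix i j assume "i < j" "j < N"
    then show "Lm $$ (i,j) = 0" by (auto simp: Lm_def intro!: prod_zero)
  qed
  also have "\<dots> = T N u"
    unfolding diag_mat_def T_def using Lc
    by (simp add: prod.distinct_set_conv_list[symmetric] atLeast0LessThan Lm_def)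
  finally have dL: "det Lm = T N u" .
  show ?thesis
    unfolding det_nat_mat prod det_mult[OF Lc Dc] dL
    by (simp add: Dm_def)
qed

definition sg :: "nat \<Rightarrow> real" where "sg N = (\<Prod>a<N. (-1)^a)"

lemma sg_sq: "sg N * sg N = 1"
  by (simp add: sg_def prod.distrib[symmetric] power_add[symmetric] mult_2[symmetric] power_mult)

lemma T_vdm: "T N u = sg N * vdm N u"
proof -
  have "T N u = (\<Prod>a<N. (-1)^a * (\<Prod>m<a. u m - u a))"
    unfolding T_def
  proof (rule prod.cong[OF refl])
    fix a
    have "(\<Prod>m<a. u a - u m) = (\<Prod>m<a. (-1) * (u m - u a))" by simp
    also have "\<dots> = (-1)^a * (\<Prod>m<a. u m - u a)" by (simp only: prod.distrib prod_constant card_lessThan)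
    finally show "(\<Prod>m<a. u a - u m) = (-1)^a * (\<Prod>m<a. u m - u a)" .
  qed
  then show ?thesis by (simp add: prod.distrib sg_def vdm_def)
qed

lemma vdm_nonzero: "u \<in> gen_dom N \<Longrightarrow> vdm N u \<noteq> 0"
  unfolding vdm_def gen_dom_def by (auto simp: prod_zero_iff)

lemma tendsto_det_nat:
  assumes "\<And>a c. a < N \<Longrightarrow> c < N \<Longrightarrow> ((\<lambda>u. F a c u) \<longlongrightarrow> L a c) F'"
  shows "((\<lambda>u. det_nat N (\<lambda>a c. F a c u)) \<longlongrightarrow> det_nat N L) F'"
  unfolding det_nat_def
proof (intro tendsto_sum tendsto_mult tendsto_const tendsto_prod)
  fix p i assume "p \<in> {p. p permutes {..<N}}" "i \<in> {..<N}"
  then show "((\<lambda>u. F i (p i) u) \<longlongrightarrow> L i (p i)) F'"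
    using assms permutes_in_image by fastforce
qed

lemma det_lim:
  "((\<lambda>u. det_nat N (\<lambda>a c. pw (\<kappa> c) (s c) 0 (u a)) / vdm N u) \<longlongrightarrow>
     sg N * det_nat N (\<lambda>a c. pw (\<kappa> c) (s c) a 1 / fact a)) (at (\<lambda>_. 1) within gen_dom N)"
proof -
  have ev: "eventually (\<lambda>u. sg N * det_nat N (\<lambda>a c. dd (pw (\<kappa> c) (s c) 0) u a (u a)) =
              det_nat N (\<lambda>a c. pw (\<kappa> c) (s c) 0 (u a)) / vdm N u) (at (\<lambda>_. 1) within gen_dom N)"
    unfolding eventually_at_filter
  proof (intro always_eventually allI impI)
    fix u assume "u \<in> gen_dom N"
    then have v: "vdm N u \<noteq> 0" by (rule vdm_nonzero)
    show "sg N * det_nat N (\<lambda>a c. dd (pw (\<kappa> c) (s c) 0) u a (u a)) =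
              det_nat N (\<lambda>a c. pw (\<kappa> c) (s c) 0 (u a)) / vdm N u"
      unfolding det_newton[of N "\<lambda>c. pw (\<kappa> c) (s c) 0" u] T_vdm using v sg_sq[of N]
      by (simp add: field_simps)
  qed
  have "((\<lambda>u. sg N * det_nat N (\<lambda>a c. dd (pw (\<kappa> c) (s c) 0) u a (u a))) \<longlongrightarrow>
     sg N * det_nat N (\<lambda>a c. pw (\<kappa> c) (s c) a 1 / fact a)) (at (\<lambda>_. 1) within gen_dom N)"
    by (intro tendsto_mult tendsto_const tendsto_det_nat entry_lim)
  then show ?thesis using tendsto_cong[OF ev] by simp
qed


lemma det_nat_cong: "(\<And>a b. a < N \<Longrightarrow> b < N \<Longrightarrow> A a b = A' a b) \<Longrightarrow> det_nat N A = det_nat N A'"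
  unfolding det_nat_def
proof (intro sum.cong refl arg_cong2[where f="(*)"] prod.cong)
  fix p x assume "p \<in> {p. p permutes {..<N}}" "x \<in> {..<N}" "\<And>a b. a < N \<Longrightarrow> b < N \<Longrightarrow> A a b = A' a b"
  then show "A x (p x) = A' x (p x)" using permutes_in_image by fastforce
qed

lemma det_nat_row_split:
  assumes "i < N"
  shows "det_nat N (\<lambda>a b. if a = i then X b else A a b) =
     (\<Sum>p\<in>{p. p permutes {..<N}}. of_int (sign p) * (X (p i) * (\<Prod>a\<in>{..<N}-{i}. A a (p a))))"
  unfolding det_nat_def
proof (rule sum.cong[OF refl])
  fix p
  have "(\<Prod>a<N. if a = i then X (p a) else A a (p a)) = (if i = i then X (p i) else A i (p i)) * (\<Prod>a\<in>{..<N}-{i}. if a = i then X (p a) else A a (p a))"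
    using assms by (intro prod.remove) auto
  also have "\<dots> = X (p i) * (\<Prod>a\<in>{..<N}-{i}. A a (p a))" by simp
  finally show "of_int (sign p) * (\<Prod>a<N. if a = i then X (p a) else A a (p a)) =
      of_int (sign p) * (X (p i) * (\<Prod>a\<in>{..<N}-{i}. A a (p a)))" by simp
qed

lemma det_nat_row_scale:
  assumes "i < N"
  shows "c * det_nat N (\<lambda>a b. if a = i then X b else A a b) = det_nat N (\<lambda>a b. if a = i then c * X b else A a b)"
  unfolding det_nat_row_split[OF assms] by (simp add: sum_distrib_left algebra_simps)

lemma det_row_deriv:
  assumes iN: "i < N" and der: "\<And>b. b < N \<Longrightarrow> (h b has_real_derivative h' b) (at t)"
  shows "((\<lambda>t. det_nat N (\<lambda>a b. if a = i then h b t else A a b)) has_real_derivative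
            det_nat N (\<lambda>a b. if a = i then h' b else A a b)) (at t)"
proof -
  have e1: "(\<lambda>t. det_nat N (\<lambda>a b. if a = i then h b t else A a b)) =
    (\<lambda>t. \<Sum>p\<in>{p. p permutes {..<N}}. of_int (sign p) * (h (p i) t * (\<Prod>a\<in>{..<N}-{i}. A a (p a))))"
    by (rule ext, rule det_nat_row_split[OF iN])
  show ?thesis
    unfolding e1 det_nat_row_split[OF iN]
  proof (intro DERIV_sum DERIV_cmult DERIV_cmult_right)
    fix p assume "p \<in> {p. p permutes {..<N}}"
    then have "p i < N" using iN permutes_in_image by fastforce
    then show "(h (p i) has_real_derivative h' (p i)) (at t)" by (rule der)
  qed
qed

definition E :: "nat \<Rightarrow> (nat \<Rightarrow> int) \<Rightarrow> nat \<Rightarrow> int" where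
  "E N lam b = lam b + int N - 1 - int b"

definition F0 :: "nat \<Rightarrow> (nat \<Rightarrow> int) \<Rightarrow> (nat \<Rightarrow> real) \<Rightarrow> real" where
  "F0 N lam v = det_nat N (\<lambda>a b. v a powi E N lam b)"

lemma vdm_schur: "vdm N v * schur N lam v = F0 N lam v"
proof (cases "vdm N v = 0")
  case False then show ?thesis by (simp add: schur_def F0_def E_def)
next
  case True
  then obtain j i where ji: "j < N" "i < j" "v i = v j" unfolding vdm_def by (auto simp: prod_zero_iff)
  have "det (mat N N (\<lambda>(a,b). v a powi E N lam b)) = 0"
  proof (rule det_identical_rows[of _ N i j])
    show "row (mat N N (\<lambda>(a,b). v a powi E N lam b)) i = row (mat N N (\<lambda>(a,b). v a powi E N lam b)) j"
      using ji by (auto intro!: eq_vecI)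
  qed (use ji in auto)
  then show ?thesis using True by (simp add: F0_def det_nat_mat)
qed

definition R :: "nat \<Rightarrow> (nat \<Rightarrow> int) \<Rightarrow> nat \<Rightarrow> nat \<Rightarrow> (nat \<Rightarrow> real) \<Rightarrow> real" where
  "R N lam i j v = det_nat N (\<lambda>a b. if a = i then real_of_int (E N lam b) ^ j * v i powi E N lam b else v a powi E N lam b)"

definition Pd :: "nat \<Rightarrow> (nat \<Rightarrow> int) \<Rightarrow> nat \<Rightarrow> nat \<Rightarrow> (nat \<Rightarrow> real) \<Rightarrow> real" where
  "Pd N lam i j v = det_nat N (\<lambda>a b. if a = i then real_of_int (E N lam b) ^ j *
       (real_of_int (E N lam b) * v i powi (E N lam b - 1)) else v a powi E N lam b)"

lemma partial_from_R:
  assumes iN: "i < N" and G: "\<And>w. w i > 0 \<Longrightarrow> G w = R N lam i j w" and v: "v i > 0"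
  shows "partial i G v = Pd N lam i j v"
proof -
  define H where "H t = det_nat N (\<lambda>a b. if a = i then real_of_int (E N lam b) ^ j * t powi E N lam b else v a powi E N lam b)" for t
  have ev: "eventually (\<lambda>t. G (v(i := t)) = H t) (nhds (v i))"
  proof -
    have "eventually (\<lambda>t. t > 0) (nhds (v i))" using eventually_nhds_in_open[of "{0<..}" "v i"] v by simp
    then show ?thesis
    proof eventually_elim
      case (elim t)
      then have "G (v(i := t)) = R N lam i j (v(i := t))" by (intro G) simp
      also have "\<dots> = H t" unfolding R_def H_def by (rule det_nat_cong) auto
      finally show ?case .
    qed
  qed
  have "(H has_real_derivative Pd N lam i j v) (at (v i))"
    unfolding H_def[abs_def] Pd_def
  proof (rule det_row_deriv[OF iN])
    fix b
    show "((\<lambda>t. real_of_int (E N lam b) ^ j * t powi E N lam b) has_real_derivative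
        real_of_int (E N lam b) ^ j * (real_of_int (E N lam b) * v i powi (E N lam b - 1))) (at (v i))"
      using v by (auto intro!: DERIV_cmult derivative_eq_intros)
  qed
  then have "deriv H (v i) = Pd N lam i j v" by (rule DERIV_imp_deriv)
  moreover have "deriv (\<lambda>t. G (v(i := t))) (v i) = deriv H (v i)"
    by (rule deriv_cong_ev[OF ev refl])
  ultimately show ?thesis by (simp add: partial_def)
qed

lemma euler_R:
  assumes iN: "i < N"
  shows "\<forall>v. v i > 0 \<longrightarrow> (euler_op i ^^ j) (F0 N lam) v = R N lam i j v"
proof (induction j)
  case 0
  show ?case unfolding F0_def R_def by (auto intro!: det_nat_cong)
next
  case (Suc j)
  show ?case
  proof (intro allI impI)
    fix v :: "nat \<Rightarrow> real" assume v: "v i > 0"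
    have "(euler_op i ^^ Suc j) (F0 N lam) v = v i * partial i ((euler_op i ^^ j) (F0 N lam)) v"
      by (simp add: euler_op_def)
    also have "\<dots> = v i * Pd N lam i j v"
      using partial_from_R[where G="(euler_op i ^^ j) (F0 N lam)" and lam=lam and j=j and v=v and i=i and N=N] iN v Suc.IH by auto
    also have "\<dots> = R N lam i (Suc j) v"
      unfolding Pd_def R_def det_nat_row_scale[OF iN]
    proof (rule det_nat_cong)
      fix a b
      have "v i * v i powi (E N lam b - 1) = v i powi E N lam b"
        using power_int_add_1'[of "v i" "E N lam b - 1"] v by simp
      then show "(if a = i then v i * (real_of_int (E N lam b) ^ j * (real_of_int (E N lam b) * v i powi (E N lam b - 1))) else v a powi E N lam b) =
          (if a = i then real_of_int (E N lam b) ^ Suc j * v i powi E N lam b else v a powi E N lam b)"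
        by (simp add: algebra_simps)
    qed
    finally show "(euler_op i ^^ Suc j) (F0 N lam) v = R N lam i (Suc j) v" .
  qed
qed

lemma row_col_swap:
  "(\<Sum>i<N. det_nat N (\<lambda>a b. if a = i then B a b else A a b)) =
   (\<Sum>b<N. det_nat N (\<lambda>a c. if c = b then B a c else A a c))"
proof -
  have "(\<Sum>i<N. det_nat N (\<lambda>a b. if a = i then B a b else A a b)) =
     (\<Sum>p\<in>{p. p permutes {..<N}}. of_int (sign p) * (\<Sum>i<N. \<Prod>a<N. if a = i then B a (p a) else A a (p a)))"
    unfolding det_nat_def by (subst sum.swap) (simp add: sum_distrib_left)
  also have "\<dots> = (\<Sum>p\<in>{p. p permutes {..<N}}. of_int (sign p) * (\<Sum>b<N. \<Prod>a<N. if p a = b then B a (p a) else A a (p a)))"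
  proof (rule sum.cong[OF refl])
    fix p assume "p \<in> {p. p permutes {..<N}}"
    then have pp: "p permutes {..<N}" by simp
    have bij: "bij_betw p {..<N} {..<N}" using pp by (rule permutes_imp_bij)
    have "(\<Sum>b<N. \<Prod>a<N. if p a = b then B a (p a) else A a (p a)) =
          (\<Sum>i<N. \<Prod>a<N. if p a = p i then B a (p a) else A a (p a))"
      using sum.reindex_bij_betw[OF bij, of "\<lambda>b. \<Prod>a<N. if p a = b then B a (p a) else A a (p a)"] by simp
    also have "\<dots> = (\<Sum>i<N. \<Prod>a<N. if a = i then B a (p a) else A a (p a))"
    proof (intro sum.cong refl prod.cong)
      fix i a assume "i \<in> {..<N}" "a \<in> {..<N}"
      then have "p a = p i \<longleftrightarrow> a = i" using bij unfolding bij_betw_def inj_on_def by auto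
      then show "(if p a = p i then B a (p a) else A a (p a)) = (if a = i then B a (p a) else A a (p a))" by simp
    qed
    finally show "of_int (sign p) * (\<Sum>i<N. \<Prod>a<N. if a = i then B a (p a) else A a (p a)) =
        of_int (sign p) * (\<Sum>b<N. \<Prod>a<N. if p a = b then B a (p a) else A a (p a))" by simp
  qed
  also have "\<dots> = (\<Sum>b<N. det_nat N (\<lambda>a c. if c = b then B a c else A a c))"
    unfolding det_nat_def by (subst sum.swap) (simp add: sum_distrib_left)
  finally show ?thesis .
qed


definition kb :: "nat \<Rightarrow> (nat \<Rightarrow> int) \<Rightarrow> nat \<Rightarrow> nat \<Rightarrow> nat \<Rightarrow> real" where
  "kb N lam k b c = (if c = b then real_of_int (E N lam c) ^ k else 1)"
definition sb :: "nat \<Rightarrow> (nat \<Rightarrow> int) \<Rightarrow> real \<Rightarrow> nat \<Rightarrow> nat \<Rightarrow> real" where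
  "sb N lam q b c = (if c = b then real_of_int (E N lam c) - q else real_of_int (E N lam c))"

lemma D_op_eq:
  assumes u: "u \<in> gen_dom N" and k: "1 \<le> k"
  shows "D_op N q k (schur N lam) u =
     (\<Sum>b<N. det_nat N (\<lambda>a c. pw (kb N lam k b c) (sb N lam q b c) 0 (u a)) / vdm N u)"
proof -
  have pos: "\<And>a. a < N \<Longrightarrow> u a > 0" using u by (auto simp: gen_dom_def)
  have F: "(\<lambda>v. vdm N v * schur N lam v) = F0 N lam" by (rule ext, rule vdm_schur)
  have step: "u i powr (1 - q) * partial i ((euler_op i ^^ (k - 1)) (F0 N lam)) u =
      det_nat N (\<lambda>a b. if a = i then real_of_int (E N lam b) ^ k * u a powr (real_of_int (E N lam b) - q)
                         else u a powr real_of_int (E N lam b))" if iN: "i < N" for i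
  proof -
    have "partial i ((euler_op i ^^ (k - 1)) (F0 N lam)) u = Pd N lam i (k - 1) u"
      using partial_from_R[where G="(euler_op i ^^ (k - 1)) (F0 N lam)" and lam=lam and j="k - 1" and v=u and i=i and N=N]
        euler_R[OF iN, of "k - 1" lam] pos[OF iN] iN by auto
    also have "u i powr (1 - q) * \<dots> = det_nat N (\<lambda>a b. if a = i then real_of_int (E N lam b) ^ k * u a powr (real_of_int (E N lam b) - q)
                         else u a powr real_of_int (E N lam b))"
      unfolding Pd_def det_nat_row_scale[OF iN]
    proof (rule det_nat_cong)
      fix a b assume a: "a < N"
      have ua: "u a > 0" using pos a by simp
      have ui: "u i > 0" using pos iN by simp
      have p1: "u a powi E N lam b = u a powr real_of_int (E N lam b)"
        using powr_real_of_int'[of "u a" "E N lam b"] ua by simp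
      have p2: "u i powi (E N lam b - 1) = u i powr (real_of_int (E N lam b) - 1)"
        using powr_real_of_int'[of "u i" "E N lam b - 1"] ui by simp
      have p3: "u i powr (1 - q) * u i powr (real_of_int (E N lam b) - 1) = u i powr (real_of_int (E N lam b) - q)"
        by (simp add: powr_add[symmetric])
      have p4: "real_of_int (E N lam b) ^ (k - 1) * real_of_int (E N lam b) = real_of_int (E N lam b) ^ k"
        using k by (cases k) (simp_all add: mult.commute)
      have "u i powr (1 - q) * (real_of_int (E N lam b) ^ (k - 1) * (real_of_int (E N lam b) * u i powi (E N lam b - 1)))
          = (real_of_int (E N lam b) ^ (k - 1) * real_of_int (E N lam b)) * (u i powr (1 - q) * u i powr (real_of_int (E N lam b) - 1))"
        unfolding p2 by (simp only: mult_ac)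
      also have "\<dots> = real_of_int (E N lam b) ^ k * u i powr (real_of_int (E N lam b) - q)"
        unfolding p3 p4 ..
      finally show "(if a = i then u i powr (1 - q) * (real_of_int (E N lam b) ^ (k - 1) * (real_of_int (E N lam b) * u i powi (E N lam b - 1))) else u a powi E N lam b) =
         (if a = i then real_of_int (E N lam b) ^ k * u a powr (real_of_int (E N lam b) - q) else u a powr real_of_int (E N lam b))"
        using p1 by auto
    qed
    finally show ?thesis .
  qed
  have "D_op N q k (schur N lam) u = (1 / vdm N u) *
     (\<Sum>i<N. det_nat N (\<lambda>a b. if a = i then real_of_int (E N lam b) ^ k * u a powr (real_of_int (E N lam b) - q)
                         else u a powr real_of_int (E N lam b)))"
    unfolding D_op_def F using step by simp
  also have "\<dots> = (1 / vdm N u) *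
     (\<Sum>b<N. det_nat N (\<lambda>a c. if c = b then real_of_int (E N lam c) ^ k * u a powr (real_of_int (E N lam c) - q)
                         else u a powr real_of_int (E N lam c)))"
    using row_col_swap[of N "\<lambda>a c. real_of_int (E N lam c) ^ k * u a powr (real_of_int (E N lam c) - q)" "\<lambda>a c. u a powr real_of_int (E N lam c)"]
    by (simp only:)
  also have "\<dots> = (\<Sum>b<N. det_nat N (\<lambda>a c. pw (kb N lam k b c) (sb N lam q b c) 0 (u a)) / vdm N u)"
  proof -
    have "\<And>b. det_nat N (\<lambda>a c. if c = b then real_of_int (E N lam c) ^ k * u a powr (real_of_int (E N lam c) - q)
                         else u a powr real_of_int (E N lam c)) = det_nat N (\<lambda>a c. pw (kb N lam k b c) (sb N lam q b c) 0 (u a))"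
      by (rule det_nat_cong) (simp add: pw0 kb_def sb_def)
    then show ?thesis by (simp add: sum_divide_distrib)
  qed
  finally show ?thesis .
qed

lemma d_lim:
  assumes k: "1 \<le> k"
  shows "((\<lambda>u. D_op N q k (schur N lam) u) \<longlongrightarrow>
     (\<Sum>b<N. sg N * det_nat N (\<lambda>a c. pw (kb N lam k b c) (sb N lam q b c) a 1 / fact a))) (at (\<lambda>_. 1) within gen_dom N)"
proof -
  have ev: "eventually (\<lambda>u. (\<Sum>b<N. det_nat N (\<lambda>a c. pw (kb N lam k b c) (sb N lam q b c) 0 (u a)) / vdm N u) =
      D_op N q k (schur N lam) u) (at (\<lambda>_. 1) within gen_dom N)"
    unfolding eventually_at_filter
    by (intro always_eventually allI impI) (simp add: D_op_eq[OF _ k])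
  have "((\<lambda>u. (\<Sum>b<N. det_nat N (\<lambda>a c. pw (kb N lam k b c) (sb N lam q b c) 0 (u a)) / vdm N u)) \<longlongrightarrow>
     (\<Sum>b<N. sg N * det_nat N (\<lambda>a c. pw (kb N lam k b c) (sb N lam q b c) a 1 / fact a))) (at (\<lambda>_. 1) within gen_dom N)"
    by (intro tendsto_sum det_lim)
  then show ?thesis using tendsto_cong[OF ev] by simp
qed

lemma c_lim:
  "((\<lambda>u. schur N lam u) \<longlongrightarrow> sg N * det_nat N (\<lambda>a c. pw 1 (real_of_int (E N lam c)) a 1 / fact a))
      (at (\<lambda>_. 1) within gen_dom N)"
proof -
  have ev: "eventually (\<lambda>u. det_nat N (\<lambda>a c. pw 1 (real_of_int (E N lam c)) 0 (u a)) / vdm N u = schur N lam u)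
      (at (\<lambda>_. 1) within gen_dom N)"
    unfolding eventually_at_filter
  proof (intro always_eventually allI impI)
    fix u assume u: "u \<in> gen_dom N"
    have "det_nat N (\<lambda>a c. pw 1 (real_of_int (E N lam c)) 0 (u a)) = det_nat N (\<lambda>a b. u a powi (lam b + int N - 1 - int b))"
    proof (rule det_nat_cong)
      fix a b assume "a < N"
      then have "u a > 0" using u by (auto simp: gen_dom_def)
      then show "pw 1 (real_of_int (E N lam b)) 0 (u a) = u a powi (lam b + int N - 1 - int b)"
        using powr_real_of_int'[of "u a" "E N lam b"] by (simp add: pw0 E_def)
    qed
    then show "det_nat N (\<lambda>a c. pw 1 (real_of_int (E N lam c)) 0 (u a)) / vdm N u = schur N lam u"
      by (simp add: schur_def)
  qed
  show ?thesis using tendsto_cong[OF ev] det_lim[of N "\<lambda>_. 1" "\<lambda>c. real_of_int (E N lam c)"] by simp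
qed


definition ffp :: "nat \<Rightarrow> real poly" where "ffp a = (\<Prod>i<a. [:-real i, 1:])"

lemma poly_ffp: "poly (ffp a) y = ff y a"
  by (simp add: ffp_def ff_def poly_prod)

lemma degree_ffp: "degree (ffp a) = a"
  unfolding ffp_def by (rule degree_lin_prod)

lemma coeff_ffp: "coeff (ffp a) a = 1"
  unfolding ffp_def by (rule lead_lin_prod)

definition Lg :: "nat \<Rightarrow> (nat \<Rightarrow> real) \<Rightarrow> nat \<Rightarrow> real \<Rightarrow> real" where
  "Lg N e c y = (\<Prod>j\<in>{..<N}-{c}. (y - e j) / (e c - e j))"

lemma Lg_node:
  assumes inj: "inj_on e {..<N}" and c: "c < N" and d: "d < N"
  shows "Lg N e c (e d) = (if c = d then 1 else 0)"
proof (cases "c = d")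
  case True
  have "Lg N e c (e d) = (\<Prod>j\<in>{..<N}-{c}. 1)"
    unfolding Lg_def
  proof (rule prod.cong[OF refl])
    fix j assume "j \<in> {..<N}-{c}"
    then have "e c \<noteq> e j" using inj c True unfolding inj_on_def by auto
    then show "(e d - e j) / (e c - e j) = 1" using True by simp
  qed
  then show ?thesis using True by simp
next
  case False
  then have "Lg N e c (e d) = 0" unfolding Lg_def using d by (intro prod_zero) auto
  then show ?thesis using False by simp
qed

lemma lagrange:
  assumes inj: "inj_on e {..<N}" and a: "a < N"
  shows "ff y a / fact a = (\<Sum>c<N. Lg N e c y * (ff (e c) a / fact a))"
proof -
  define Den where "Den c = (\<Prod>j\<in>{..<N}-{c}. e c - e j)" for c
  define P1 where "P1 = Polynomial.smult (1 / fact a) (ffp a)"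
  define P2 where "P2 = (\<Sum>c<N. Polynomial.smult ((ff (e c) a / fact a) / Den c) (\<Prod>j\<in>{..<N}-{c}. [:-e j, 1:]))"
  have pP1: "poly P1 y = ff y a / fact a" for y by (simp add: P1_def poly_ffp)
  have pP2: "poly P2 y = (\<Sum>c<N. Lg N e c y * (ff (e c) a / fact a))" for y
    unfolding P2_def poly_sum
  proof (rule sum.cong[OF refl])
    fix c
    have "Lg N e c y = (\<Prod>j\<in>{..<N}-{c}. y - e j) / Den c"
      unfolding Lg_def Den_def by (rule prod_dividef)
    then show "poly (Polynomial.smult ((ff (e c) a / fact a) / Den c) (\<Prod>j\<in>{..<N}-{c}. [:-e j, 1:])) y =
        Lg N e c y * (ff (e c) a / fact a)"
      by (simp add: poly_prod mult_ac)
  qed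
  have dP1: "degree P1 < N" using a by (simp add: P1_def degree_ffp)
  have dP2: "degree P2 < N"
  proof -
    have "degree P2 \<le> N - 1"
      unfolding P2_def
    proof (intro degree_sum_le)
      fix c assume "c \<in> {..<N}"
      then have "degree (\<Prod>j\<in>{..<N}-{c}. [:-e j, 1:]) = N - 1"
        by (subst degree_prod_eq_sum_degree) auto
      then show "degree (Polynomial.smult ((ff (e c) a / fact a) / Den c) (\<Prod>j\<in>{..<N}-{c}. [:-e j, 1:])) \<le> N - 1"
        using degree_smult_le le_trans by metis
    qed simp
    then show ?thesis using a by linarith
  qed
  have cardA: "card (e ` {..<N}) = N" using card_image[OF inj] by simp
  have "P1 = P2"
  proof (rule poly_eqI_degree[of "e ` {..<N}"])
    fix x assume "x \<in> e ` {..<N}"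
    then obtain d where d: "d < N" "x = e d" by auto
    have "poly P2 x = (\<Sum>c<N. (if c = d then 1 else 0) * (ff (e c) a / fact a))"
      unfolding pP2 d(2) using Lg_node[OF inj _ d(1)] by (intro sum.cong) auto
    also have "\<dots> = (\<Sum>c<N. if c = d then ff (e c) a / fact a else 0)"
      by (rule sum.cong) auto
    also have "\<dots> = ff (e d) a / fact a" using d(1) by (simp add: sum.delta)
    finally show "poly P1 x = poly P2 x" using pP1 d(2) by simp
  qed (use cardA dP1 dP2 in auto)
  then show ?thesis using pP1[of y] pP2[of y] by simp
qed

lemma cramer_nat:
  assumes b: "b < N"
  shows "det_nat N (\<lambda>a c'. if c' = b then (\<Sum>c<N. \<alpha> c * M a c) else M a c') = \<alpha> b * det_nat N M"
proof -
  define A where "A = mat N N (\<lambda>(i,j). M i j)"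
  define x where "x = vec N \<alpha>"
  have Ac: "A \<in> carrier_mat N N" and xc: "x \<in> carrier_vec N" by (auto simp: A_def x_def)
  have eq: "mat N N (\<lambda>(i,j). if j = b then (\<Sum>c<N. \<alpha> c * M i c) else M i j) = replace_col A (A *\<^sub>v x) b"
    by (rule eq_matI) (auto simp: replace_col_def A_def x_def scalar_prod_def atLeast0LessThan mult.commute intro!: sum.cong)
  have "det_nat N (\<lambda>a c'. if c' = b then (\<Sum>c<N. \<alpha> c * M a c) else M a c') = det (replace_col A (A *\<^sub>v x) b)"
    unfolding det_nat_mat eq[symmetric] by simp
  also have "\<dots> = x $ b * det A" by (rule cramer_lemma_mat[OF Ac xc b])
  also have "\<dots> = \<alpha> b * det_nat N M" using b by (simp add: x_def A_def det_nat_mat)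
  finally show ?thesis .
qed


lemma detM_nz:
  assumes inj: "inj_on e {..<N}" and N: "0 < N"
  shows "det_nat N (\<lambda>a c. ff (e c) a / fact a) \<noteq> 0"
proof
  assume z: "det_nat N (\<lambda>a c. ff (e c) a / fact a) = 0"
  define At where "At = mat N N (\<lambda>(c,a). ff (e c) a / fact a)"
  have Atc: "At \<in> carrier_mat N N" by (simp add: At_def)
  have tr: "transpose_mat At = mat N N (\<lambda>(a,c). ff (e c) a / fact a)"
    by (rule eq_matI) (auto simp: At_def)
  have "det At = 0"
    using det_transpose[OF Atc] z tr by (simp add: det_nat_mat)
  then obtain v where v: "v \<in> carrier_vec N" "v \<noteq> 0\<^sub>v N" "At *\<^sub>v v = 0\<^sub>v N"
    using det_0_iff_vec_prod_zero[OF Atc] by blast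
  have dv: "dim_vec v = N" using v(1) by simp
  have vc: "(\<Sum>a<N. ff (e c) a / fact a * v $ a) = 0" if c: "c < N" for c
  proof -
    have "(At *\<^sub>v v) $ c = 0" using v(3) c by simp
    then show ?thesis using c dv by (simp add: At_def scalar_prod_def atLeast0LessThan)
  qed
  define Q where "Q = (\<Sum>a<N. Polynomial.smult (v $ a / fact a) (ffp a))"
  have pQ: "poly Q (e c) = 0" if "c < N" for c
  proof -
    have "poly Q (e c) = (\<Sum>a<N. ff (e c) a / fact a * v $ a)"
      unfolding Q_def poly_sum by (intro sum.cong) (auto simp: poly_ffp)
    then show ?thesis using vc[OF that] by simp
  qed
  have dQ: "degree Q < N"
  proof -
    have "degree Q \<le> N - 1"
      unfolding Q_def
    proof (intro degree_sum_le)
      fix a assume "a \<in> {..<N}"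
      then have "degree (ffp a) \<le> N - 1" by (simp add: degree_ffp)
      then show "degree (Polynomial.smult (v $ a / fact a) (ffp a)) \<le> N - 1"
        using degree_smult_le le_trans by metis
    qed simp
    then show ?thesis using N by linarith
  qed
  have cardA: "card (e ` {..<N}) = N" using card_image[OF inj] by simp
  have Q0: "Q = 0"
    by (rule poly_eqI_degree[of "e ` {..<N}"]) (use pQ cardA dQ N in auto)
  define S where "S = {a. a < N \<and> v $ a \<noteq> 0}"
  have "S \<noteq> {}"
  proof
    assume "S = {}"
    then have "v = 0\<^sub>v N" using dv by (auto simp: vec_eq_iff S_def)
    then show False using v(2) by simp
  qed
  moreover have finS: "finite S" by (simp add: S_def)
  ultimately have a0S: "Max S \<in> S" by (rule Max_in[rotated])
  define a0 where "a0 = Max S"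
  have a0: "a0 < N" "v $ a0 \<noteq> 0" using a0S by (auto simp: a0_def S_def)
  have maxS: "\<And>a. a < N \<Longrightarrow> a0 < a \<Longrightarrow> v $ a = 0"
  proof (rule ccontr)
    fix a assume "a < N" "a0 < a" "v $ a \<noteq> 0"
    then have "a \<in> S" by (simp add: S_def)
    then have "a \<le> a0" using finS by (simp add: a0_def)
    then show False using \<open>a0 < a\<close> by simp
  qed
  have "coeff Q a0 = (\<Sum>a<N. v $ a / fact a * coeff (ffp a) a0)"
    by (simp add: Q_def coeff_sum)
  also have "\<dots> = v $ a0 / fact a0 * coeff (ffp a0) a0 + (\<Sum>a\<in>{..<N}-{a0}. v $ a / fact a * coeff (ffp a) a0)"
    using a0(1) by (subst sum.remove[of _ a0]) auto
  also have "(\<Sum>a\<in>{..<N}-{a0}. v $ a / fact a * coeff (ffp a) a0) = 0"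
  proof (rule sum.neutral, intro ballI)
    fix a assume a: "a \<in> {..<N}-{a0}"
    show "v $ a / fact a * coeff (ffp a) a0 = 0"
    proof (cases "a < a0")
      case True
      then have "coeff (ffp a) a0 = 0" by (intro coeff_eq_0) (simp add: degree_ffp)
      then show ?thesis by simp
    next
      case False
      then have "v $ a = 0" using a maxS by auto
      then show ?thesis by simp
    qed
  qed
  finally have "coeff Q a0 = v $ a0 / fact a0" by (simp add: coeff_ffp)
  then show False using Q0 a0(2) by simp
qed


theorem mainTheorem5:
  fixes N k :: nat and q :: real and lam :: "nat \<Rightarrow> int"
  assumes "0 < N" and "-1 \<le> q" and "q \<le> 1" and "1 \<le> k"
    and "is_signature N lam"
  shows "\<exists>c d. ((\<lambda>u. schur N lam u) \<longlongrightarrow> c) (at (\<lambda>_. 1) within gen_dom N) \<and> c \<noteq> 0 \<and>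
           ((\<lambda>u. D_op N q k (schur N lam) u) \<longlongrightarrow> d) (at (\<lambda>_. 1) within gen_dom N) \<and>
           d / c = real N ^ (k + 1) * pp_moment N q lam k"
proof -
  note N = assms(1) and k = assms(4) and sig = assms(5)
  define e where "e c = real_of_int (E N lam c)" for c
  have Edec: "E N lam b' < E N lam b" if "b < b'" "b' < N" for b b'
  proof -
    have "lam b' \<le> lam b" using sig that unfolding is_signature_def by auto
    moreover have "int b < int b'" using that by simp
    ultimately show ?thesis unfolding E_def by linarith
  qed
  have inj: "inj_on e {..<N}"
  proof (rule inj_onI)
    fix b b' assume "b \<in> {..<N}" "b' \<in> {..<N}" "e b = e b'"
    then show "b = b'" using Edec[of b b'] Edec[of b' b] by (cases b b' rule: linorder_cases) (auto simp: e_def)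
  qed
  define M where "M a c = ff (e c) a / fact a" for a c
  define c where "c = sg N * det_nat N M"
  define W where "W b = real_of_int (E N lam b) ^ k * Lg N e b (e b - q)" for b
  define d where "d = (\<Sum>b<N. sg N * det_nat N (\<lambda>a c. pw (kb N lam k b c) (sb N lam q b c) a 1 / fact a))"
  have cl: "((\<lambda>u. schur N lam u) \<longlongrightarrow> c) (at (\<lambda>_. 1) within gen_dom N)"
  proof -
    have "det_nat N (\<lambda>a c. pw 1 (real_of_int (E N lam c)) a 1 / fact a) = det_nat N M"
      by (rule det_nat_cong) (simp add: pw_def M_def e_def)
    then show ?thesis using c_lim[of N lam] by (simp add: c_def)
  qed
  have dl: "((\<lambda>u. D_op N q k (schur N lam) u) \<longlongrightarrow> d) (at (\<lambda>_. 1) within gen_dom N)"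
    unfolding d_def by (rule d_lim[OF k])
  have sg0: "sg N \<noteq> 0" using sg_sq[of N] by auto
  have dM: "det_nat N M \<noteq> 0" unfolding M_def by (rule detM_nz[OF inj N])
  have c0: "c \<noteq> 0" using sg0 dM by (simp add: c_def)
  have summand: "det_nat N (\<lambda>a c. pw (kb N lam k b c) (sb N lam q b c) a 1 / fact a) = W b * det_nat N M"
    if b: "b < N" for b
  proof -
    have "det_nat N (\<lambda>a c. pw (kb N lam k b c) (sb N lam q b c) a 1 / fact a) =
        det_nat N (\<lambda>a c'. if c' = b then (\<Sum>c<N. (real_of_int (E N lam b) ^ k * Lg N e c (e b - q)) * M a c) else M a c')"
    proof (rule det_nat_cong)
      fix a c' assume a: "a < N" and c': "c' < N"
      show "pw (kb N lam k b c') (sb N lam q b c') a 1 / fact a =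
          (if c' = b then (\<Sum>c<N. (real_of_int (E N lam b) ^ k * Lg N e c (e b - q)) * M a c) else M a c')"
      proof (cases "c' = b")
        case True
        have "pw (kb N lam k b c') (sb N lam q b c') a 1 / fact a = real_of_int (E N lam b) ^ k * (ff (e b - q) a / fact a)"
          using True by (simp add: pw_def kb_def sb_def e_def)
        also have "\<dots> = real_of_int (E N lam b) ^ k * (\<Sum>c<N. Lg N e c (e b - q) * M a c)"
          unfolding M_def by (subst lagrange[OF inj a]) rule
        also have "\<dots> = (\<Sum>c<N. (real_of_int (E N lam b) ^ k * Lg N e c (e b - q)) * M a c)"
          by (simp add: sum_distrib_left mult.assoc)
        finally show ?thesis using True by simp
      next
        case False
        then show ?thesis by (simp add: pw_def kb_def sb_def M_def e_def)
      qed
    qed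
    also have "\<dots> = W b * det_nat N M" unfolding W_def by (rule cramer_nat[OF b])
    finally show ?thesis .
  qed
  have "d = sg N * det_nat N M * (\<Sum>b<N. W b)"
  proof -
    have "d = (\<Sum>b<N. sg N * (W b * det_nat N M))"
      unfolding d_def by (rule sum.cong) (simp_all add: summand)
    also have "\<dots> = sg N * det_nat N M * (\<Sum>b<N. W b)"
      by (simp add: sum_distrib_left mult.commute mult.left_commute)
    finally show ?thesis .
  qed
  then have dc: "d / c = (\<Sum>b<N. W b)" using sg0 dM by (simp add: c_def)
  have wW: "pp_weight N q lam b * pp_atom N lam b ^ k * real N ^ k = W b" if "b < N" for b
  proof -
    have "pp_weight N q lam b = Lg N e b (e b - q)"
      unfolding pp_weight_def Lg_def
    proof (rule prod.cong[OF refl])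
      fix j
      have h: "real_of_int ((lam b - int b) - (lam j - int j)) = e b - e j" by (simp add: e_def E_def)
      show "(real_of_int ((lam b - int b) - (lam j - int j)) - q) / real_of_int ((lam b - int b) - (lam j - int j)) =
          (e b - q - e j) / (e b - e j)" unfolding h by (simp add: diff_right_commute)
    qed
    moreover have "pp_atom N lam b = e b / real N" by (simp add: pp_atom_def e_def E_def)
    moreover have "(e b / real N) ^ k * real N ^ k = e b ^ k"
      using N by (simp add: power_divide)
    ultimately show ?thesis by (simp add: W_def e_def mult.commute mult.left_commute)
  qed
  have "real N ^ (k + 1) * pp_moment N q lam k = (\<Sum>b<N. pp_weight N q lam b * pp_atom N lam b ^ k * real N ^ k)"
  proof -
    have nn: "real N ^ (k + 1) * (1 / real N) = real N ^ k" using N by simp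
    have "real N ^ (k + 1) * pp_moment N q lam k = (real N ^ (k + 1) * (1 / real N)) * (\<Sum>b<N. pp_weight N q lam b * pp_atom N lam b ^ k)"
      unfolding pp_moment_def by (simp only: mult.assoc)
    also have "\<dots> = (\<Sum>b<N. pp_weight N q lam b * pp_atom N lam b ^ k * real N ^ k)"
      unfolding nn by (simp add: sum_distrib_left mult.commute)
    finally show ?thesis .
  qed
  also have "\<dots> = (\<Sum>b<N. W b)" by (rule sum.cong) (auto simp: wW)
  finally have "d / c = real N ^ (k + 1) * pp_moment N q lam k" using dc by simp
  then show ?thesis using cl dl c0 by blast
qed

end
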